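(* Let $G$ be a 5-vertex-critical $(P_5,\text{chair})$-free graph and let $C=v_1v_2v_3v_4v_5v_1$ be an induced $C_5$ in $G$. Then for every $1\le i\le 5$, the vertex set of every connected component of $G[S^2_3(i)]$ is a homogeneous set of $G$.
   Context: All graphs are finite and simple; $P_5$ is the path on 5 vertices; the chair is a $P_4$ plus a vertex adjacent to exactly one of the two middle vertices of the $P_4$; "$H$-free" means no induced subgraph isomorphic to $H$; $G$ is $k$-vertex-critical if $\chi(G)=k$ and $\chi(G-v)<k$ for all $v$. Indices modulo 5. $S^2_3(i)=\{v\in V(G)\setminus V(C): N(v)\cap V(C)=\{v_{i-2},v_i,v_{i+2}\}\}$. A set $H\subseteq V(G)$ is homogeneous if no vertex of $V(G)\setminus H$ is mixed on $H$, i.e. every vertex outside $H$ is adjacent to all or to none of the vertices of $H$. *)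

theory Defs
  imports Main
begin

definition simple_graph :: "'a set \<Rightarrow> ('a \<Rightarrow> 'a \<Rightarrow> bool) \<Rightarrow> bool" where
  "simple_graph V E \<longleftrightarrow> finite V \<and>
     (\<forall>x y. E x y \<longrightarrow> x \<in> V \<and> y \<in> V \<and> x \<noteq> y) \<and>
     (\<forall>x y. E x y \<longrightarrow> E y x)"

definition colorable :: "'a set \<Rightarrow> ('a \<Rightarrow> 'a \<Rightarrow> bool) \<Rightarrow> nat \<Rightarrow> bool" where
  "colorable V E k \<longleftrightarrow> (\<exists>c :: 'a \<Rightarrow> nat. (\<forall>x\<in>V. c x < k) \<and>
     (\<forall>x\<in>V. \<forall>y\<in>V. E x y \<longrightarrow> c x \<noteq> c y))"

definition chromatic_number :: "'a set \<Rightarrow> ('a \<Rightarrow> 'a \<Rightarrow> bool) \<Rightarrow> nat" where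
  "chromatic_number V E = (LEAST k. colorable V E k)"

definition vertex_critical :: "'a set \<Rightarrow> ('a \<Rightarrow> 'a \<Rightarrow> bool) \<Rightarrow> nat \<Rightarrow> bool" where
  "vertex_critical V E k \<longleftrightarrow> chromatic_number V E = k \<and>
     (\<forall>v\<in>V. chromatic_number (V - {v}) E < k)"

definition contains_induced :: "'a set \<Rightarrow> ('a \<Rightarrow> 'a \<Rightarrow> bool) \<Rightarrow> nat \<Rightarrow> (nat \<Rightarrow> nat \<Rightarrow> bool) \<Rightarrow> bool" where
  "contains_induced V E n F \<longleftrightarrow> (\<exists>f :: nat \<Rightarrow> 'a. inj_on f {..<n} \<and> f ` {..<n} \<subseteq> V \<and>
     (\<forall>i<n. \<forall>j<n. E (f i) (f j) \<longleftrightarrow> F i j))"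

definition P5_adj :: "nat \<Rightarrow> nat \<Rightarrow> bool" where
  "P5_adj i j \<longleftrightarrow> i = j + 1 \<or> j = i + 1"

definition chair_adj :: "nat \<Rightarrow> nat \<Rightarrow> bool" where
  "chair_adj i j \<longleftrightarrow> (i < 4 \<and> j < 4 \<and> (i = j + 1 \<or> j = i + 1)) \<or>
                     (i = 4 \<and> j = 1) \<or> (i = 1 \<and> j = 4)"

definition P5_free :: "'a set \<Rightarrow> ('a \<Rightarrow> 'a \<Rightarrow> bool) \<Rightarrow> bool" where
  "P5_free V E \<longleftrightarrow> \<not> contains_induced V E 5 P5_adj"

definition chair_free :: "'a set \<Rightarrow> ('a \<Rightarrow> 'a \<Rightarrow> bool) \<Rightarrow> bool" where
  "chair_free V E \<longleftrightarrow> \<not> contains_induced V E 5 chair_adj"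

definition induced_C5 :: "'a set \<Rightarrow> ('a \<Rightarrow> 'a \<Rightarrow> bool) \<Rightarrow> (nat \<Rightarrow> 'a) \<Rightarrow> bool" where
  "induced_C5 V E v \<longleftrightarrow> inj_on v {..<5} \<and> v ` {..<5} \<subseteq> V \<and>
     (\<forall>i<5. \<forall>j<5. E (v i) (v j) \<longleftrightarrow> (j = (i + 1) mod 5 \<or> i = (j + 1) mod 5))"

text \<open>S^2_3(i): vertices outside C whose neighbours on C are exactly v_{i-2}, v_i, v_{i+2}.\<close>
definition S23 :: "'a set \<Rightarrow> ('a \<Rightarrow> 'a \<Rightarrow> bool) \<Rightarrow> (nat \<Rightarrow> 'a) \<Rightarrow> nat \<Rightarrow> 'a set" where
  "S23 V E v i = {u \<in> V - v ` {..<5}.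
     {j. j < 5 \<and> E u (v j)} = {(i + 3) mod 5, i mod 5, (i + 2) mod 5}}"

definition components :: "'a set \<Rightarrow> ('a \<Rightarrow> 'a \<Rightarrow> bool) \<Rightarrow> 'a set set" where
  "components S E = {{y. (\<lambda>a b. a \<in> S \<and> b \<in> S \<and> E a b)\<^sup>*\<^sup>* x y} | x. x \<in> S}"

definition homogeneous :: "'a set \<Rightarrow> ('a \<Rightarrow> 'a \<Rightarrow> bool) \<Rightarrow> 'a set \<Rightarrow> bool" where
  "homogeneous V E H \<longleftrightarrow> H \<subseteq> V \<and>
     (\<forall>u \<in> V - H. (\<forall>h\<in>H. E u h) \<or> (\<forall>h\<in>H. \<not> E u h))"

end

theory Submission
  imports Defs
begin

lemma less5_cases: "(k::nat) < 5 \<Longrightarrow> k = 0 \<or> k = 1 \<or> k = 2 \<or> k = 3 \<or> k = 4"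
  by auto

lemma P5_w:
  assumes sg: "simple_graph V E" and "p0 \<in> V" "p1 \<in> V" "p2 \<in> V" "p3 \<in> V" "p4 \<in> V"
    and "distinct [p0,p1,p2,p3,p4]"
    and "E p0 p1" "E p1 p2" "E p2 p3" "E p3 p4"
    and "\<not> E p0 p2" "\<not> E p0 p3" "\<not> E p0 p4" "\<not> E p1 p3" "\<not> E p1 p4" "\<not> E p2 p4"
  shows "contains_induced V E 5 P5_adj"
proof -
  have s: "\<And>a b. E a b = E b a" using sg unfolding simple_graph_def by blast
  have irr: "\<And>a. \<not> E a a" using sg unfolding simple_graph_def by blast
  define f where "f = (\<lambda>k::nat. if k = 0 then p0 else if k = 1 then p1 else if k = 2 then p2 else if k = 3 then p3 else p4)"
  show ?thesis unfolding contains_induced_def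
  proof (intro exI[of _ f] conjI allI impI)
    show "inj_on f {..<5}" unfolding inj_on_def
      using assms(7) by (auto simp: f_def dest!: less5_cases)
    show "f ` {..<5} \<subseteq> V" using assms(2-6) by (auto simp: f_def)
    fix i j :: nat assume "i < 5" "j < 5"
    then show "E (f i) (f j) = P5_adj i j"
      using assms(8-) irr by (auto simp: f_def P5_adj_def s dest!: less5_cases)
  qed
qed

lemma chair_w:
  assumes sg: "simple_graph V E" and "p0 \<in> V" "p1 \<in> V" "p2 \<in> V" "p3 \<in> V" "p4 \<in> V"
    and "distinct [p0,p1,p2,p3,p4]"
    and "E p0 p1" "E p1 p2" "E p2 p3" "E p1 p4"
    and "\<not> E p0 p2" "\<not> E p0 p3" "\<not> E p0 p4" "\<not> E p1 p3" "\<not> E p3 p4" "\<not> E p2 p4"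
  shows "contains_induced V E 5 chair_adj"
proof -
  have s: "\<And>a b. E a b = E b a" using sg unfolding simple_graph_def by blast
  have irr: "\<And>a. \<not> E a a" using sg unfolding simple_graph_def by blast
  define f where "f = (\<lambda>k::nat. if k = 0 then p0 else if k = 1 then p1 else if k = 2 then p2 else if k = 3 then p3 else p4)"
  show ?thesis unfolding contains_induced_def
  proof (intro exI[of _ f] conjI allI impI)
    show "inj_on f {..<5}" unfolding inj_on_def
      using assms(7) by (auto simp: f_def dest!: less5_cases)
    show "f ` {..<5} \<subseteq> V" using assms(2-6) by (auto simp: f_def)
    fix i j :: nat assume "i < 5" "j < 5"
    then show "E (f i) (f j) = chair_adj i j"
      using assms(8-) irr by (auto simp: f_def chair_adj_def s dest!: less5_cases)
  qed
qed

lemma set5: "A \<subseteq> {..<(5::nat)} \<Longrightarrow> ({j. j < 5 \<and> P j} = A) = (\<forall>j<5. P j = (j \<in> A))"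
  by auto

lemma all5: "(\<forall>j<(5::nat). Q j) = (Q 0 \<and> Q 1 \<and> Q 2 \<and> Q 3 \<and> Q 4)"
  by (auto dest!: less5_cases)

locale loc =
  fixes V :: "'a set" and E :: "'a \<Rightarrow> 'a \<Rightarrow> bool" and a0 a1 a2 a3 a4 x y z :: 'a
  assumes sg: "simple_graph V E" and P: "P5_free V E" and Ch: "chair_free V E"
    and inV: "a0 \<in> V" "a1 \<in> V" "a2 \<in> V" "a3 \<in> V" "a4 \<in> V" "x \<in> V" "y \<in> V" "z \<in> V"
    and d: "distinct [a0,a1,a2,a3,a4,x,y,z]"
    and H: "E a0 a1" "E a1 a2" "E a2 a3" "E a3 a4" "E a4 a0"
      "\<not> E a0 a2" "\<not> E a0 a3" "\<not> E a1 a3" "\<not> E a1 a4" "\<not> E a2 a4"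
      "E x a0" "\<not> E x a1" "E x a2" "E x a3" "\<not> E x a4"
      "E y a0" "\<not> E y a1" "E y a2" "E y a3" "\<not> E y a4"
      "E x y" "E z x" "\<not> E z y"
begin

lemma d2: "distinct [z,y,x,a4,a3,a2,a1,a0]" using d by auto

lemma sym: "E p q = E q p" using sg unfolding simple_graph_def by blast

lemmas P5 = P[unfolded P5_free_def] and Ch2 = Ch[unfolded chair_free_def]

lemma case0: assumes "\<not> E z a0" and "\<not> E z a1" and "\<not> E z a2" and "\<not> E z a3" and "\<not> E z a4" shows False
  using Ch2 chair_w[OF sg, of a1 a0 x z a4] inV d d2 H assms by (simp add: sym)


lemma case1: assumes "E z a0" and "\<not> E z a1" and "\<not> E z a2" and "\<not> E z a3" and "\<not> E z a4" shows False
  using P5 P5_w[OF sg, of a2 a3 a4 a0 z] inV d d2 H assms by (simp add: sym)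


lemma case2: assumes "\<not> E z a0" and "E z a1" and "\<not> E z a2" and "\<not> E z a3" and "\<not> E z a4" shows False
  using P5 P5_w[OF sg, of a1 z x a3 a4] inV d d2 H assms by (simp add: sym)


lemma case3: assumes "E z a0" and "E z a1" and "\<not> E z a2" and "\<not> E z a3" and "\<not> E z a4" shows False
  using P5 P5_w[OF sg, of a1 z x a3 a4] inV d d2 H assms by (simp add: sym)


lemma case4: assumes "\<not> E z a0" and "\<not> E z a1" and "E z a2" and "\<not> E z a3" and "\<not> E z a4" shows False
  using P5 P5_w[OF sg, of a0 a4 a3 a2 z] inV d d2 H assms by (simp add: sym)


lemma case5: assumes "E z a0" and "\<not> E z a1" and "E z a2" and "\<not> E z a3" and "\<not> E z a4" shows False
  using Ch2 chair_w[OF sg, of a1 a0 a4 a3 z] inV d d2 H assms by (simp add: sym)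


lemma case6: assumes "\<not> E z a0" and "E z a1" and "E z a2" and "\<not> E z a3" and "\<not> E z a4" shows False
  using P5 P5_w[OF sg, of a0 a4 a3 a2 z] inV d d2 H assms by (simp add: sym)


lemma case7: assumes "E z a0" and "E z a1" and "E z a2" and "\<not> E z a3" and "\<not> E z a4" shows False
  using P5 P5_w[OF sg, of a1 z x a3 a4] inV d d2 H assms by (simp add: sym)


lemma case8: assumes "\<not> E z a0" and "\<not> E z a1" and "\<not> E z a2" and "E z a3" and "\<not> E z a4" shows False
  using P5 P5_w[OF sg, of a0 a1 a2 a3 z] inV d d2 H assms by (simp add: sym)


lemma case9: assumes "E z a0" and "\<not> E z a1" and "\<not> E z a2" and "E z a3" and "\<not> E z a4" shows False
  using Ch2 chair_w[OF sg, of a4 a0 a1 a2 z] inV d d2 H assms by (simp add: sym)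


lemma case10: assumes "\<not> E z a0" and "E z a1" and "\<not> E z a2" and "E z a3" and "\<not> E z a4" shows False
  using Ch2 chair_w[OF sg, of a2 a1 a0 a4 z] inV d d2 H assms by (simp add: sym)


lemma case11: assumes "E z a0" and "E z a1" and "\<not> E z a2" and "E z a3" and "\<not> E z a4" shows False
  using Ch2 chair_w[OF sg, of a4 a0 y a2 z] inV d d2 H assms by (simp add: sym)


lemma case12: assumes "\<not> E z a0" and "\<not> E z a1" and "E z a2" and "E z a3" and "\<not> E z a4" shows False
  using P5 P5_w[OF sg, of a1 a0 a4 a3 z] inV d d2 H assms by (simp add: sym)


lemma case14: assumes "\<not> E z a0" and "E z a1" and "E z a2" and "E z a3" and "\<not> E z a4" shows False
  using P5 P5_w[OF sg, of a4 a0 y a2 z] inV d d2 H assms by (simp add: sym)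


lemma case15: assumes "E z a0" and "E z a1" and "E z a2" and "E z a3" and "\<not> E z a4" shows False
  using Ch2 chair_w[OF sg, of a4 a3 z a1 y] inV d d2 H assms by (simp add: sym)


lemma case16: assumes "\<not> E z a0" and "\<not> E z a1" and "\<not> E z a2" and "\<not> E z a3" and "E z a4" shows False
  using P5 P5_w[OF sg, of a1 a2 a3 a4 z] inV d d2 H assms by (simp add: sym)


lemma case17: assumes "E z a0" and "\<not> E z a1" and "\<not> E z a2" and "\<not> E z a3" and "E z a4" shows False
  using P5 P5_w[OF sg, of a1 a2 a3 a4 z] inV d d2 H assms by (simp add: sym)


lemma case18: assumes "\<not> E z a0" and "E z a1" and "\<not> E z a2" and "\<not> E z a3" and "E z a4" shows False
  using P5 P5_w[OF sg, of a1 z a4 a3 y] inV d d2 H assms by (simp add: sym)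


lemma case19: assumes "E z a0" and "E z a1" and "\<not> E z a2" and "\<not> E z a3" and "E z a4" shows False
  using P5 P5_w[OF sg, of a1 z a4 a3 y] inV d d2 H assms by (simp add: sym)


lemma case20: assumes "\<not> E z a0" and "\<not> E z a1" and "E z a2" and "\<not> E z a3" and "E z a4" shows False
  using Ch2 chair_w[OF sg, of a1 a0 a4 z y] inV d d2 H assms by (simp add: sym)


lemma case21: assumes "E z a0" and "\<not> E z a1" and "E z a2" and "\<not> E z a3" and "E z a4" shows False
  using Ch2 chair_w[OF sg, of a1 a0 y a3 z] inV d d2 H assms by (simp add: sym)


lemma case22: assumes "\<not> E z a0" and "E z a1" and "E z a2" and "\<not> E z a3" and "E z a4" shows False
  using P5 P5_w[OF sg, of a1 z a4 a3 y] inV d d2 H assms by (simp add: sym)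


lemma case23: assumes "E z a0" and "E z a1" and "E z a2" and "\<not> E z a3" and "E z a4" shows False
  using P5 P5_w[OF sg, of a1 z a4 a3 y] inV d d2 H assms by (simp add: sym)


lemma case24: assumes "\<not> E z a0" and "\<not> E z a1" and "\<not> E z a2" and "E z a3" and "E z a4" shows False
  using P5 P5_w[OF sg, of a0 a1 a2 a3 z] inV d d2 H assms by (simp add: sym)


lemma case25: assumes "E z a0" and "\<not> E z a1" and "\<not> E z a2" and "E z a3" and "E z a4" shows False
  using P5 P5_w[OF sg, of a1 a2 x z a4] inV d d2 H assms by (simp add: sym)


lemma case26: assumes "\<not> E z a0" and "E z a1" and "\<not> E z a2" and "E z a3" and "E z a4" shows False
  using P5 P5_w[OF sg, of a2 y a0 a4 z] inV d d2 H assms by (simp add: sym)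


lemma case27: assumes "E z a0" and "E z a1" and "\<not> E z a2" and "E z a3" and "E z a4" shows False
  using P5 P5_w[OF sg, of a4 z a1 a2 y] inV d d2 H assms by (simp add: sym)


lemma case28: assumes "\<not> E z a0" and "\<not> E z a1" and "E z a2" and "E z a3" and "E z a4" shows False
  using P5 P5_w[OF sg, of a1 a0 y a3 z] inV d d2 H assms by (simp add: sym)


lemma case29: assumes "E z a0" and "\<not> E z a1" and "E z a2" and "E z a3" and "E z a4" shows False
  using Ch2 chair_w[OF sg, of a1 a2 z a4 y] inV d d2 H assms by (simp add: sym)


lemma case30: assumes "\<not> E z a0" and "E z a1" and "E z a2" and "E z a3" and "E z a4" shows False
  using Ch2 chair_w[OF sg, of a1 z x y a4] inV d d2 H assms by (simp add: sym)


lemma case31: assumes "E z a0" and "E z a1" and "E z a2" and "E z a3" and "E z a4" shows False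
  using Ch2 chair_w[OF sg, of a1 z x y a4] inV d d2 H assms by (simp add: sym)


lemma allcases: "\<not>(E z a0 \<and> \<not>E z a1 \<and> E z a2 \<and> E z a3 \<and> \<not>E z a4) \<Longrightarrow> False"
  by (cases "E z a0"; cases "E z a1"; cases "E z a2"; cases "E z a3"; cases "E z a4";
    ((rule case0; assumption) | (rule case1; assumption) | (rule case2; assumption) | (rule case3; assumption) | (rule case4; assumption) | (rule case5; assumption) | (rule case6; assumption) | (rule case7; assumption) | (rule case8; assumption) | (rule case9; assumption) | (rule case10; assumption) | (rule case11; assumption) | (rule case12; assumption) | (rule case14; assumption) | (rule case15; assumption) | (rule case16; assumption) | (rule case17; assumption) | (rule case18; assumption) | (rule case19; assumption) | (rule case20; assumption) | (rule case21; assumption) | (rule case22; assumption) | (rule case23; assumption) | (rule case24; assumption) | (rule case25; assumption) | (rule case26; assumption) | (rule case27; assumption) | (rule case28; assumption) | (rule case29; assumption) | (rule case30; assumption) | (rule case31; assumption) | blast))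

end

theorem mainTheorem8:
  fixes V :: "'a set" and E :: "'a \<Rightarrow> 'a \<Rightarrow> bool" and v :: "nat \<Rightarrow> 'a"
  assumes "simple_graph V E"
    and "vertex_critical V E 5"
    and "P5_free V E"
    and "chair_free V E"
    and "induced_C5 V E v"
  shows "\<forall>i<5. \<forall>K \<in> components (S23 V E v i) E. homogeneous V E K"
proof (intro allI impI ballI)
  fix i K assume i: "i < (5::nat)" and K: "K \<in> components (S23 V E v i) E"
  define S where "S = S23 V E v i"
  define R where "R = (\<lambda>a b. a \<in> S \<and> b \<in> S \<and> E a b)"
  obtain x0 where x0: "x0 \<in> S" and Kd: "K = {y. R\<^sup>*\<^sup>* x0 y}"
    using K unfolding components_def S_def R_def by blast
  define a where "a k = v ((i + k) mod 5)" for k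
  have sg: "simple_graph V E" by fact
  have sym: "\<And>p q. E p q = E q p" using sg unfolding simple_graph_def by blast
  have irr: "\<And>p. \<not> E p p" using sg unfolding simple_graph_def by blast
  have C: "induced_C5 V E v" by fact
  have inj: "inj_on v {..<5}" and vV: "v ` {..<5} \<subseteq> V"
    and vE: "\<And>p q. p < 5 \<Longrightarrow> q < 5 \<Longrightarrow> E (v p) (v q) = (q = (p + 1) mod 5 \<or> p = (q + 1) mod 5)"
    using C unfolding induced_C5_def by auto
  have ia: "i = 0 \<or> i = 1 \<or> i = 2 \<or> i = 3 \<or> i = 4" using i by auto
  have vd: "distinct [v 0, v 1, v 2, v 3, v 4]"
  proof -
    have vne: "\<And>p q. p < 5 \<Longrightarrow> q < 5 \<Longrightarrow> p \<noteq> q \<Longrightarrow> v p \<noteq> v q"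
      using inj by (auto simp: inj_on_def)
    show ?thesis by (simp add: vne)
  qed
  have vin: "v 0 \<in> V" "v 1 \<in> V" "v 2 \<in> V" "v 3 \<in> V" "v 4 \<in> V" using vV by auto
  have vim: "v ` {..<5} = {v 0, v 1, v 2, v 3, v 4}"
    by (auto simp: lessThan_def dest!: less5_cases)
  have vE2: "E (v 0) (v 1)" "E (v 1) (v 2)" "E (v 2) (v 3)" "E (v 3) (v 4)" "E (v 4) (v 0)"
    "\<not> E (v 0) (v 2)" "\<not> E (v 0) (v 3)" "\<not> E (v 1) (v 3)" "\<not> E (v 1) (v 4)" "\<not> E (v 2) (v 4)"
    using vE[of 0 1] vE[of 1 2] vE[of 2 3] vE[of 3 4] vE[of 4 0] vE[of 0 2] vE[of 0 3]
      vE[of 1 3] vE[of 1 4] vE[of 2 4] by auto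
  have acase: "(i = 0 \<and> a 0 = v 0 \<and> a 1 = v 1 \<and> a 2 = v 2 \<and> a 3 = v 3 \<and> a 4 = v 4) \<or>
 (i = 1 \<and> a 0 = v 1 \<and> a 1 = v 2 \<and> a 2 = v 3 \<and> a 3 = v 4 \<and> a 4 = v 0) \<or>
 (i = 2 \<and> a 0 = v 2 \<and> a 1 = v 3 \<and> a 2 = v 4 \<and> a 3 = v 0 \<and> a 4 = v 1) \<or>
 (i = 3 \<and> a 0 = v 3 \<and> a 1 = v 4 \<and> a 2 = v 0 \<and> a 3 = v 1 \<and> a 4 = v 2) \<or>
 (i = 4 \<and> a 0 = v 4 \<and> a 1 = v 0 \<and> a 2 = v 1 \<and> a 3 = v 2 \<and> a 4 = v 3)"
  proof -
    have m: "\<And>k j. (i + k) mod 5 = j \<Longrightarrow> a k = v j" by (simp add: a_def)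
    show ?thesis using ia by (elim disjE) (simp_all, (intro conjI m; simp)+)
  qed
  have ad: "distinct [a 0, a 1, a 2, a 3, a 4]"
    using acase vd by (elim disjE) auto
  have ain: "a 0 \<in> V" "a 1 \<in> V" "a 2 \<in> V" "a 3 \<in> V" "a 4 \<in> V"
    using acase vin by (elim disjE; simp)+
  have aim: "v ` {..<5} = {a 0, a 1, a 2, a 3, a 4}"
  proof -
    have aim1: "{a 0, a 1, a 2, a 3, a 4} \<subseteq> v ` {..<5}" by (auto simp: a_def)
    have aim2: "v 0 \<in> {a 0, a 1, a 2, a 3, a 4} \<and> v 1 \<in> {a 0, a 1, a 2, a 3, a 4} \<and>
      v 2 \<in> {a 0, a 1, a 2, a 3, a 4} \<and> v 3 \<in> {a 0, a 1, a 2, a 3, a 4} \<and> v 4 \<in> {a 0, a 1, a 2, a 3, a 4}"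
      using acase by (elim disjE) simp_all
    have "v ` {..<5} \<subseteq> {a 0, a 1, a 2, a 3, a 4}" unfolding vim using aim2 by (simp only: insert_subset empty_subsetI)
    then show ?thesis using aim1 by (rule subset_antisym)
  qed
  have aE: "E (a 0) (a 1)" "E (a 1) (a 2)" "E (a 2) (a 3)" "E (a 3) (a 4)" "E (a 4) (a 0)"
    "\<not> E (a 0) (a 2)" "\<not> E (a 0) (a 3)" "\<not> E (a 1) (a 3)" "\<not> E (a 1) (a 4)" "\<not> E (a 2) (a 4)"
    using acase vE2 by (elim disjE; simp add: sym)+
  have Sset: "u \<in> S \<longleftrightarrow> u \<in> V \<and> u \<notin> v ` {..<5} \<and>
      {j. j < 5 \<and> E u (v j)} = {(i + 3) mod 5, i mod 5, (i + 2) mod 5}" for u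
    unfolding S_def S23_def by auto
  have setc: "{j. j < 5 \<and> E u (v j)} = {(i + 3) mod 5, i mod 5, (i + 2) mod 5} \<longleftrightarrow>
      (E u (a 0) \<and> \<not> E u (a 1) \<and> E u (a 2) \<and> E u (a 3) \<and> \<not> E u (a 4))" for u
  proof -
    have A: "{(i + 3) mod 5, i mod 5, (i + 2) mod 5} \<subseteq> {..<5}" by auto
    show ?thesis unfolding set5[OF A] all5 using acase
      by (elim disjE) auto
  qed
  have Sfacts: "u \<in> S \<Longrightarrow> u \<in> V \<and> u \<notin> {a 0, a 1, a 2, a 3, a 4} \<and>
      E u (a 0) \<and> \<not> E u (a 1) \<and> E u (a 2) \<and> E u (a 3) \<and> \<not> E u (a 4)" for u
    using Sset[of u] setc[of u] aim by simp
  have Sintro: "u \<in> V \<Longrightarrow> u \<notin> {a 0, a 1, a 2, a 3, a 4} \<Longrightarrow>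
      E u (a 0) \<Longrightarrow> \<not> E u (a 1) \<Longrightarrow> E u (a 2) \<Longrightarrow> E u (a 3) \<Longrightarrow> \<not> E u (a 4) \<Longrightarrow> u \<in> S" for u
    using Sset[of u] setc[of u] aim by simp
  have edge: "E z q" if p: "p \<in> S" and q: "q \<in> S" and pq: "E p q" and z: "z \<in> V" "z \<notin> S"
    "z \<notin> {a 0, a 1, a 2, a 3, a 4}" "z \<noteq> p" "z \<noteq> q" and zp: "E z p" for p q z
  proof (rule ccontr)
    assume nzq: "\<not> E z q"
    note Sp = Sfacts[OF p] and Sq = Sfacts[OF q]
    have "p \<noteq> q" using pq irr by auto
    then have dd: "distinct [a 0, a 1, a 2, a 3, a 4, p, q, z]" using ad Sp Sq z by auto
    interpret loc V E "a 0" "a 1" "a 2" "a 3" "a 4" p q z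
      apply unfold_locales
      using assms(3,4) sg ain Sp Sq z dd aE pq zp nzq by auto
    show False
    proof (rule allcases, rule notI)
      assume "E z (a 0) \<and> \<not> E z (a 1) \<and> E z (a 2) \<and> E z (a 3) \<and> \<not> E z (a 4)"
      then have "z \<in> S" using Sintro[of z] z by (simp add: sym)
      then show False using z by simp
    qed
  qed
  have KS: "R\<^sup>*\<^sup>* x0 y \<Longrightarrow> y \<in> S" for y
    by (induction rule: rtranclp_induct) (use x0 R_def in auto)
  have KsubS: "K \<subseteq> S" using KS Kd by auto
  have SV: "S \<subseteq> V" using Sfacts by auto
  show "homogeneous V E K"
    unfolding homogeneous_def
  proof (intro conjI ballI)
    show "K \<subseteq> V" using KsubS SV by auto
    fix u assume u: "u \<in> V - K"
    show "(\<forall>h\<in>K. E u h) \<or> (\<forall>h\<in>K. \<not> E u h)"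
    proof (cases "u \<in> {a 0, a 1, a 2, a 3, a 4}")
      case True
      then show ?thesis using KsubS Sfacts by (auto simp: sym)
    next
      case nC: False
      show ?thesis
      proof (cases "u \<in> S")
        case True
        have "\<not> E u h" if h: "h \<in> K" for h
        proof
          assume "E u h"
          then have "R h u" using h KsubS True by (auto simp: R_def sym)
          then have "u \<in> K" using h Kd by auto
          then show False using u by simp
        qed
        then show ?thesis by blast
      next
        case nS: False
        have "E u y = E u x0" if "R\<^sup>*\<^sup>* x0 y" for y
          using that
        proof (induction rule: rtranclp_induct)
          case base then show ?case by simp
        next
          case (step y w)
          have yK: "y \<in> K" and wK: "w \<in> K" using step Kd by auto
          have yw: "y \<in> S" "w \<in> S" "E y w" using step(2) R_def by auto
          have uy: "u \<noteq> y" and uw: "u \<noteq> w" using u yK wK by auto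
          have uV: "u \<in> V" using u by simp
          have ewy: "E w y" using yw(3) sym by blast
          have e1: "E u y \<Longrightarrow> E u w" using edge[OF yw(1) yw(2) yw(3) uV nS nC uy uw] .
          have e2: "E u w \<Longrightarrow> E u y" using edge[OF yw(2) yw(1) ewy uV nS nC uw uy] .
          have "E u w = E u y" using e1 e2 by blast
          then show ?case using step by simp
        qed
        then have "\<forall>h\<in>K. E u h = E u x0" unfolding Kd by blast
        then show ?thesis by blast
      qed
    qed
  qed
qed

end
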